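(* Assume that $(X_j,Y_j)$, $j\in\mathbb{Z}$, is a memoryless process (i.e., $P_{X_1^N,Y_1^N}(x_1^N,y_1^N)=\prod_{j=1}^NP_{X,Y}(x_j,y_j)$), where $X_j\in\mathcal{U}$ with $|\mathcal{U}|=L$ and $Y_j\in\mathcal{Y}$ with $\mathcal{Y}$ finite. Then for every $n\ge1$, \[K_{n+1}\le\begin{cases}\frac{2(L-1)}{L}K_n^2 & \text{if } B_{n+1}=0,\\ \left(1+\frac L2\right)K_n & \text{if } B_{n+1}=1.\end{cases}\]
   Context: Identify $\mathcal{U}$ with $\{0,1,\dots,L-1\}$ with addition modulo $L$. For $U\in\mathcal{U}$ and finite-valued $Q$, the non-binary total variation distance is \[K^{(L)}(U|Q)=\sum_q\sum_{u'\ne u}\frac{P_Q(q)}{L-1}\cdot\frac{|P_{U|Q}(u|q)-P_{U|Q}(u'|q)|}{2},\] where the inner sum is over all ordered pairs $(u,u')\in\mathcal{U}^2$ with $u'\ne u$. Polarization setup: for $n\ge1$, $N=2^n$, $G_N=B_NG_2^{\otimes n}$ with $G_2=\begin{bmatrix}1&0\\1&1\end{bmatrix}$ and $B_N$ the bit-reversal permutation matrix; set $U_1^N=X_1^NG_N$ with arithmetic modulo $L$, and $Q_i=(U_1^{i-1},Y_1^N)$. Let $B_1,B_2,\dots$ be i.i.d. Bernoulli$(1/2)$ and $i-1=\sum_{j=1}^nB_j2^{n-j}$. The total variation process is $K_n=K^{(L)}(U_i|Q_i)$; $K_{n+1}$ is defined in the same way with $n+1$ in place of $n$ and the same $B_j$'s.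 *)

theory Defs
  imports "HOL-Library.FuncSet" Complex_Main
begin

text \<open>Alphabet U = {0..<L}; vectors of length N = 2^n are functions on {0..<N}
  (0-based index j corresponds to the paper's index j+1).\<close>

text \<open>Non-binary total variation distance K^(L)(U|Q), given the joint pmf
  PUQ u q = P_{U,Q}(u,q) over u in {0..<L} and q in the finite set Qs.\<close>
definition tvK :: "nat \<Rightarrow> (nat \<Rightarrow> 'q \<Rightarrow> real) \<Rightarrow> 'q set \<Rightarrow> real" where
  "tvK L PUQ Qs =
     (\<Sum>q\<in>Qs. let PQ = (\<Sum>a<L. PUQ a q) in
        \<Sum>u<L. \<Sum>u'\<in>{..<L} - {u}.
          PQ / (real L - 1) * \<bar>PUQ u q / PQ - PUQ u' q / PQ\<bar> / 2)"

text \<open>G_2 = [[1,0],[1,1]] and its n-fold Kronecker power (first factor = most significant index digit).\<close>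
definition G2 :: "nat \<Rightarrow> nat \<Rightarrow> nat" where
  "G2 r c = (if r = 0 \<and> c = 1 then 0 else 1)"

fun kron_pow :: "nat \<Rightarrow> nat \<Rightarrow> nat \<Rightarrow> nat" where
  "kron_pow 0 r c = 1"
| "kron_pow (Suc n) r c = G2 (r div 2^n) (c div 2^n) * kron_pow n (r mod 2^n) (c mod 2^n)"

definition bitrev :: "nat \<Rightarrow> nat \<Rightarrow> nat" where
  "bitrev n r = (\<Sum>k<n. (r div 2^k mod 2) * 2^(n - 1 - k))"

definition BN :: "nat \<Rightarrow> nat \<Rightarrow> nat \<Rightarrow> nat" where
  "BN n r s = (if s = bitrev n r then 1 else 0)"

definition GN :: "nat \<Rightarrow> nat \<Rightarrow> nat \<Rightarrow> nat" where
  "GN n r c = (\<Sum>s<2^n. BN n r s * kron_pow n s c)"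

definition polar_transform :: "nat \<Rightarrow> nat \<Rightarrow> (nat \<Rightarrow> nat) \<Rightarrow> nat \<Rightarrow> nat" where
  "polar_transform L n x c = (\<Sum>r<2^n. x r * GN n r c) mod L"

text \<open>Joint pmf of (U_{p+1}, Q_{p+1}) with Q_{p+1} = (U_1^p, Y_1^N) for the memoryless
  process with single-letter pmf P (0-based position p).\<close>
definition joint_UQ :: "nat \<Rightarrow> (nat \<Rightarrow> 'y \<Rightarrow> real) \<Rightarrow> nat \<Rightarrow> nat
    \<Rightarrow> nat \<Rightarrow> (nat \<Rightarrow> nat) \<times> (nat \<Rightarrow> 'y) \<Rightarrow> real" where
  "joint_UQ L P n p a q =
     (\<Sum>x \<in> ({0..<2^n} \<rightarrow>\<^sub>E {0..<L}).
        if (\<forall>j<p. polar_transform L n x j = fst q j) \<and> polar_transform L n x p = a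
        then (\<Prod>j<2^n. P (x j) (snd q j)) else 0)"

definition Qset :: "nat \<Rightarrow> nat \<Rightarrow> nat \<Rightarrow> ((nat \<Rightarrow> nat) \<times> (nat \<Rightarrow> 'y::finite)) set" where
  "Qset L n p = ({0..<p} \<rightarrow>\<^sub>E {0..<L}) \<times> ({0..<2^n} \<rightarrow>\<^sub>E (UNIV :: 'y set))"

text \<open>K^(L)(U_i|Q_i) at level n with i - 1 = p.\<close>
definition Kproc :: "nat \<Rightarrow> (nat \<Rightarrow> 'y::finite \<Rightarrow> real) \<Rightarrow> nat \<Rightarrow> nat \<Rightarrow> real" where
  "Kproc L P n p = tvK L (joint_UQ L P n p) (Qset L n p)"

end

theory Submission
  imports Defs
begin


lemma mod_lt2: "(x::nat) < 2*L \<Longrightarrow> x mod L = (if x < L then x else x - L)"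
  by (auto simp: mod_if)

lemma shift_reindex:
  fixes F :: "nat \<Rightarrow> 'a::comm_monoid_add"
  assumes "a < L"
  shows "(\<Sum>u<L. F ((u + L - a) mod L)) = (\<Sum>u<L. F u)"
proof (rule sum.reindex_bij_witness[where i="\<lambda>v. (v + a) mod L" and j="\<lambda>u. (u + L - a) mod L"])
  fix v assume "v \<in> {..<L}"
  then show "((v + a) mod L + L - a) mod L = v" using assms
    by (auto simp: mod_lt2)
next
  fix u assume "u \<in> {..<L}"
  then show "((u + L - a) mod L + a) mod L = u" using assms
    by (auto simp: mod_lt2)
qed (use assms in auto)

lemma refl_reindex:
  fixes F :: "nat \<Rightarrow> 'a::comm_monoid_add"
  assumes "s < L"
  shows "(\<Sum>u<L. F ((s + L - u) mod L)) = (\<Sum>u<L. F u)"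
proof (rule sum.reindex_bij_witness[where i="\<lambda>v. (s + L - v) mod L" and j="\<lambda>u. (s + L - u) mod L"])
  fix v assume "v \<in> {..<L}"
  then show "(s + L - (s + L - v) mod L) mod L = v" using assms
    by (auto simp: mod_lt2)
qed (use assms in \<open>auto simp: mod_lt2\<close>)

definition Dfull :: "nat \<Rightarrow> (nat \<Rightarrow> real) \<Rightarrow> real" where
  "Dfull L f = (\<Sum>u<L. \<Sum>u'<L. \<bar>f u - f u'\<bar>)"

definition conv :: "nat \<Rightarrow> (nat \<Rightarrow> real) \<Rightarrow> (nat \<Rightarrow> real) \<Rightarrow> nat \<Rightarrow> real" where
  "conv L f g a = (\<Sum>c<L. f c * g ((a + L - c) mod L))"

lemma Dfull_shift:
  assumes "a < L"
  shows "(\<Sum>u<L. \<Sum>u'<L. \<bar>g ((u + L - a) mod L) - g ((u' + L - a) mod L)\<bar>) = Dfull L g"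
proof -
  have "(\<Sum>u<L. \<Sum>u'<L. \<bar>g ((u + L - a) mod L) - g ((u' + L - a) mod L)\<bar>)
      = (\<Sum>u<L. \<Sum>u'<L. \<bar>g ((u + L - a) mod L) - g u'\<bar>)"
    by (rule sum.cong[OF refl], rule shift_reindex[OF assms, where F="\<lambda>v. \<bar>g _ - g v\<bar>"])
  also have "\<dots> = (\<Sum>u<L. \<Sum>u'<L. \<bar>g u - g u'\<bar>)"
    by (rule shift_reindex[OF assms, where F="\<lambda>v. \<Sum>u'<L. \<bar>g v - g u'\<bar>"])
  finally show ?thesis unfolding Dfull_def .
qed

lemma conv_diff:
  assumes L: "L > 0" and u: "u < L" and u': "u' < L"
  shows "real L * (conv L f g u - conv L f g u') =
    (\<Sum>a<L. \<Sum>b<L. (f a - f b) * (g ((u + L - a) mod L) - g ((u' + L - a) mod L)))"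
proof -
  define G where "G a = g ((u + L - a) mod L) - g ((u' + L - a) mod L)" for a
  have G0: "(\<Sum>a<L. G a) = 0"
    unfolding G_def sum_subtractf using refl_reindex[OF u, of g] refl_reindex[OF u', of g] by simp
  have "(\<Sum>a<L. \<Sum>b<L. (f a - f b) * G a) = (\<Sum>a<L. \<Sum>b<L. f a * G a) - (\<Sum>a<L. \<Sum>b<L. f b * G a)"
    by (simp add: algebra_simps sum_subtractf)
  also have "(\<Sum>a<L. \<Sum>b<L. f b * G a) = (\<Sum>b<L. f b) * (\<Sum>a<L. G a)"
    unfolding sum_product by (rule sum.swap)
  also have "(\<Sum>a<L. \<Sum>b<L. f a * G a) = real L * (\<Sum>a<L. f a * G a)"
    by (simp add: sum_distrib_left)
  finally have "(\<Sum>a<L. \<Sum>b<L. (f a - f b) * G a) = real L * (\<Sum>a<L. f a * G a)"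
    using G0 by simp
  moreover have "(\<Sum>a<L. f a * G a) = conv L f g u - conv L f g u'"
    unfolding conv_def G_def by (simp add: algebra_simps sum_subtractf)
  ultimately show ?thesis unfolding G_def by simp
qed

lemma swap4: "(\<Sum>u\<in>A. \<Sum>u'\<in>A. \<Sum>a\<in>B. \<Sum>b\<in>B. F u u' a b) = (\<Sum>a\<in>B. \<Sum>b\<in>B. \<Sum>u\<in>A. \<Sum>u'\<in>A. F u u' a b)"
proof -
  have "(\<Sum>u\<in>A. \<Sum>u'\<in>A. \<Sum>a\<in>B. \<Sum>b\<in>B. F u u' a b) = (\<Sum>u\<in>A. \<Sum>a\<in>B. \<Sum>b\<in>B. \<Sum>u'\<in>A. F u u' a b)"
  proof (rule sum.cong[OF refl])
    fix u
    have "(\<Sum>u'\<in>A. \<Sum>a\<in>B. \<Sum>b\<in>B. F u u' a b) = (\<Sum>a\<in>B. \<Sum>u'\<in>A. \<Sum>b\<in>B. F u u' a b)" by (rule sum.swap)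
    also have "\<dots> = (\<Sum>a\<in>B. \<Sum>b\<in>B. \<Sum>u'\<in>A. F u u' a b)" by (rule sum.cong[OF refl], rule sum.swap)
    finally show "(\<Sum>u'\<in>A. \<Sum>a\<in>B. \<Sum>b\<in>B. F u u' a b) = (\<Sum>a\<in>B. \<Sum>b\<in>B. \<Sum>u'\<in>A. F u u' a b)" .
  qed
  also have "\<dots> = (\<Sum>a\<in>B. \<Sum>u\<in>A. \<Sum>b\<in>B. \<Sum>u'\<in>A. F u u' a b)" by (rule sum.swap)
  also have "\<dots> = (\<Sum>a\<in>B. \<Sum>b\<in>B. \<Sum>u\<in>A. \<Sum>u'\<in>A. F u u' a b)" by (rule sum.cong[OF refl], rule sum.swap)
  finally show ?thesis .
qed

lemma conv_bound:
  assumes L: "L > 0"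
  shows "Dfull L (conv L f g) \<le> Dfull L f * Dfull L g / real L"
proof -
  define G where "G u u' a = g ((u + L - a) mod L) - g ((u' + L - a) mod L)" for u u' a
  have pt: "\<bar>conv L f g u - conv L f g u'\<bar> \<le> (\<Sum>a<L. \<Sum>b<L. \<bar>f a - f b\<bar> * \<bar>G u u' a\<bar>) / real L"
    if "u < L" "u' < L" for u u'
  proof -
    have "real L * \<bar>conv L f g u - conv L f g u'\<bar> = \<bar>\<Sum>a<L. \<Sum>b<L. (f a - f b) * G u u' a\<bar>"
      unfolding G_def conv_diff[OF L that, of f g, symmetric] abs_mult by simp
    also have "\<dots> \<le> (\<Sum>a<L. \<Sum>b<L. \<bar>f a - f b\<bar> * \<bar>G u u' a\<bar>)"
      by (rule order_trans[OF sum_abs], rule sum_mono, rule order_trans[OF sum_abs]) (simp add: abs_mult)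
    finally show ?thesis using L by (simp add: pos_le_divide_eq mult.commute)
  qed
  have "Dfull L (conv L f g) \<le> (\<Sum>u<L. \<Sum>u'<L. (\<Sum>a<L. \<Sum>b<L. \<bar>f a - f b\<bar> * \<bar>G u u' a\<bar>) / real L)"
    unfolding Dfull_def by (intro sum_mono pt) auto
  also have "\<dots> = (\<Sum>a<L. \<Sum>b<L. \<bar>f a - f b\<bar> * (\<Sum>u<L. \<Sum>u'<L. \<bar>G u u' a\<bar>)) / real L"
  proof -
    have "(\<Sum>u<L. \<Sum>u'<L. (\<Sum>a<L. \<Sum>b<L. \<bar>f a - f b\<bar> * \<bar>G u u' a\<bar>) / real L)
        = (\<Sum>u<L. \<Sum>u'<L. \<Sum>a<L. \<Sum>b<L. \<bar>f a - f b\<bar> * \<bar>G u u' a\<bar>) / real L"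
      by (simp add: sum_divide_distrib)
    also have "\<dots> = (\<Sum>a<L. \<Sum>b<L. \<Sum>u<L. \<Sum>u'<L. \<bar>f a - f b\<bar> * \<bar>G u u' a\<bar>) / real L"
      by (rule arg_cong[where f="\<lambda>x. x / real L"], rule swap4)
    also have "\<dots> = (\<Sum>a<L. \<Sum>b<L. \<bar>f a - f b\<bar> * (\<Sum>u<L. \<Sum>u'<L. \<bar>G u u' a\<bar>)) / real L"
      by (simp add: sum_distrib_left)
    finally show ?thesis .
  qed
  also have "\<dots> = (\<Sum>a<L. \<Sum>b<L. \<bar>f a - f b\<bar> * Dfull L g) / real L"
  proof -
    have "(\<Sum>u<L. \<Sum>u'<L. \<bar>G u u' a\<bar>) = Dfull L g" if "a < L" for a
      unfolding G_def using Dfull_shift[OF that] .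
    then show ?thesis by simp
  qed
  also have "\<dots> = Dfull L f * Dfull L g / real L"
    unfolding Dfull_def by (simp add: sum_distrib_right)
  finally show ?thesis .
qed

lemma swap3: "(\<Sum>s\<in>A. \<Sum>u\<in>B. \<Sum>u'\<in>C. F s u u') = (\<Sum>u\<in>B. \<Sum>u'\<in>C. \<Sum>s\<in>A. F s u u')"
proof -
  have "(\<Sum>s\<in>A. \<Sum>u\<in>B. \<Sum>u'\<in>C. F s u u') = (\<Sum>u\<in>B. \<Sum>s\<in>A. \<Sum>u'\<in>C. F s u u')" by (rule sum.swap)
  also have "\<dots> = (\<Sum>u\<in>B. \<Sum>u'\<in>C. \<Sum>s\<in>A. F s u u')" by (rule sum.cong[OF refl], rule sum.swap)
  finally show ?thesis .
qed

lemma plus_bound: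
  assumes fnn: "\<And>u. f u \<ge> 0" and gnn: "\<And>u. g u \<ge> 0"
  shows "(\<Sum>s<L. Dfull L (\<lambda>u. f ((s + L - u) mod L) * g u))
     \<le> (\<Sum>u<L. f u) * Dfull L g + (\<Sum>u<L. g u) * Dfull L f"
proof -
  define T1 where "T1 = (\<Sum>s<L. \<Sum>u<L. \<Sum>u'<L. f ((s + L - u) mod L) * \<bar>g u - g u'\<bar>)"
  define T2 where "T2 = (\<Sum>s<L. \<Sum>u<L. \<Sum>u'<L. g u' * \<bar>f ((s + L - u) mod L) - f ((s + L - u') mod L)\<bar>)"
  have "(\<Sum>s<L. Dfull L (\<lambda>u. f ((s + L - u) mod L) * g u)) \<le>
     (\<Sum>s<L. \<Sum>u<L. \<Sum>u'<L. f ((s + L - u) mod L) * \<bar>g u - g u'\<bar> + g u' * \<bar>f ((s + L - u) mod L) - f ((s + L - u') mod L)\<bar>)"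
    unfolding Dfull_def
  proof (intro sum_mono)
    fix s u u'
    have "f ((s + L - u) mod L) * g u - f ((s + L - u') mod L) * g u'
       = f ((s + L - u) mod L) * (g u - g u') + g u' * (f ((s + L - u) mod L) - f ((s + L - u') mod L))"
      by (simp add: algebra_simps)
    then show "\<bar>f ((s + L - u) mod L) * g u - f ((s + L - u') mod L) * g u'\<bar>
       \<le> f ((s + L - u) mod L) * \<bar>g u - g u'\<bar> + g u' * \<bar>f ((s + L - u) mod L) - f ((s + L - u') mod L)\<bar>"
      using fnn gnn by (simp add: abs_mult abs_triangle_ineq[THEN order_trans])
  qed
  also have "\<dots> = T1 + T2" unfolding T1_def T2_def by (simp add: sum.distrib)
  also have "T1 = (\<Sum>u<L. f u) * Dfull L g"
  proof -
    have "T1 = (\<Sum>u<L. \<Sum>u'<L. \<Sum>s<L. f ((s + L - u) mod L) * \<bar>g u - g u'\<bar>)"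
      unfolding T1_def by (rule swap3)
    also have "\<dots> = (\<Sum>u<L. \<Sum>u'<L. (\<Sum>s<L. f ((s + L - u) mod L)) * \<bar>g u - g u'\<bar>)"
      by (simp add: sum_distrib_right)
    also have "\<dots> = (\<Sum>u<L. \<Sum>u'<L. (\<Sum>s<L. f s) * \<bar>g u - g u'\<bar>)"
      by (intro sum.cong refl) (simp add: shift_reindex)
    also have "\<dots> = (\<Sum>u<L. f u) * Dfull L g"
      unfolding Dfull_def by (simp add: sum_distrib_left)
    finally show ?thesis .
  qed
  also have "T2 = (\<Sum>u<L. g u) * Dfull L f"
  proof -
    have "T2 = (\<Sum>s<L. \<Sum>u'<L. g u' * (\<Sum>u<L. \<bar>f ((s + L - u) mod L) - f ((s + L - u') mod L)\<bar>))"
    proof -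
      have "T2 = (\<Sum>s<L. \<Sum>u'<L. \<Sum>u<L. g u' * \<bar>f ((s + L - u) mod L) - f ((s + L - u') mod L)\<bar>)"
        unfolding T2_def by (rule sum.cong[OF refl], rule sum.swap)
      then show ?thesis by (simp add: sum_distrib_left)
    qed
    also have "\<dots> = (\<Sum>s<L. \<Sum>u'<L. g u' * (\<Sum>v<L. \<bar>f v - f ((s + L - u') mod L)\<bar>))"
    proof (rule sum.cong[OF refl], rule sum.cong[OF refl])
      fix s u' assume "s \<in> {..<L}"
      then show "g u' * (\<Sum>u<L. \<bar>f ((s + L - u) mod L) - f ((s + L - u') mod L)\<bar>) = g u' * (\<Sum>v<L. \<bar>f v - f ((s + L - u') mod L)\<bar>)"
        using refl_reindex[where F="\<lambda>v. \<bar>f v - f ((s + L - u') mod L)\<bar>" and s=s and L=L] by simp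
    qed
    also have "\<dots> = (\<Sum>u'<L. g u' * (\<Sum>s<L. \<Sum>v<L. \<bar>f v - f ((s + L - u') mod L)\<bar>))"
      unfolding sum_distrib_left by (rule sum.swap)
    also have "\<dots> = (\<Sum>u'<L. g u' * Dfull L f)"
    proof (rule sum.cong[OF refl])
      fix u' assume u': "u' \<in> {..<L}"
      have "(\<Sum>s<L. \<Sum>v<L. \<bar>f v - f ((s + L - u') mod L)\<bar>) = (\<Sum>v<L. \<Sum>s<L. \<bar>f v - f ((s + L - u') mod L)\<bar>)"
        by (rule sum.swap)
      also have "\<dots> = Dfull L f" unfolding Dfull_def
        proof (rule sum.cong[OF refl])
        fix v show "(\<Sum>s<L. \<bar>f v - f ((s + L - u') mod L)\<bar>) = (\<Sum>u'<L. \<bar>f v - f u'\<bar>)"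
          using u' shift_reindex[where F="\<lambda>t. \<bar>f v - f t\<bar>" and a=u' and L=L] by simp
      qed
      finally show "g u' * (\<Sum>s<L. \<Sum>v<L. \<bar>f v - f ((s + L - u') mod L)\<bar>) = g u' * Dfull L f" by simp
    qed
    also have "\<dots> = (\<Sum>u<L. g u) * Dfull L f" by (simp add: sum_distrib_right)
    finally show ?thesis .
  qed
  finally show ?thesis .
qed



lemma sum_split_add: fixes m k :: nat shows "(\<Sum>r<m+k. F r) = (\<Sum>r<m. F r) + (\<Sum>r<k. F (m+r))"
  by (induction k) (simp_all add: add_ac)

lemma prod_split_add: fixes m k :: nat shows "(\<Prod>r<m+k. F r) = (\<Prod>r<m. F r) * (\<Prod>r<k. F (m+r))"
  by (induction k) (simp_all add: mult_ac)

lemma bitrev_Suc1: "bitrev (Suc n) r = (r mod 2) * 2^n + bitrev n (r div 2)"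
  unfolding bitrev_def
  by (subst sum.lessThan_Suc_shift) (simp add: div_mult2_eq)

lemma bitrev_lt: "bitrev n r < 2^n"
proof (induction n arbitrary: r)
  case 0 then show ?case by (simp add: bitrev_def)
next
  case (Suc n)
  have "(r mod 2) * 2^n \<le> 1 * 2^n" by (rule mult_right_mono) simp_all
  with Suc[of "r div 2"] have "(r mod 2) * 2^n + bitrev n (r div 2) < 2 * 2^n" by linarith
  then show ?case unfolding bitrev_Suc1 by simp
qed

lemma bitrev_Suc2: "bitrev (Suc n) r = 2 * bitrev n (r mod 2^n) + r div 2^n mod 2"
proof (induction n arbitrary: r)
  case 0 then show ?case by (simp add: bitrev_def)
next
  case (Suc n)
  have a: "r mod (2 * 2^n) mod 2 = r mod 2" by (simp add: mod_mult2_eq)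
  have b: "r mod (2 * 2^n) div 2 = r div 2 mod 2^n" by (simp add: mod_mult2_eq)
  have c: "r div 2 div 2^n = r div (2 * 2^n)" by (simp add: div_mult2_eq)
  have "bitrev (Suc (Suc n)) r = (r mod 2) * 2^(Suc n) + bitrev (Suc n) (r div 2)"
    by (rule bitrev_Suc1)
  also have "\<dots> = (r mod 2) * 2^(Suc n) + 2 * bitrev n (r div 2 mod 2^n) + r div 2 div 2^n mod 2"
    using Suc by simp
  also have "\<dots> = 2 * bitrev (Suc n) (r mod 2^(Suc n)) + r div 2^(Suc n) mod 2"
    by (simp add: bitrev_Suc1 a b c)
  finally show ?case .
qed

lemma kron_lsb:
  "s < 2^(Suc n) \<Longrightarrow> c < 2^(Suc n) \<Longrightarrow>
   kron_pow (Suc n) s c = G2 (s mod 2) (c mod 2) * kron_pow n (s div 2) (c div 2)"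
proof (induction n arbitrary: s c)
  case 0 then show ?case by simp
next
  case (Suc n)
  have a: "x mod (2 * 2^n) mod 2 = x mod 2" for x :: nat by (simp add: mod_mult2_eq)
  have b: "x mod (2 * 2^n) div 2 = x div 2 mod 2^n" for x :: nat by (simp add: mod_mult2_eq)
  have c: "x div 2 div 2^n = x div (2 * 2^n)" for x :: nat by (simp add: div_mult2_eq)
  have "kron_pow (Suc (Suc n)) s c = G2 (s div 2^(Suc n)) (c div 2^(Suc n)) *
      kron_pow (Suc n) (s mod 2^(Suc n)) (c mod 2^(Suc n))" by simp
  also have "\<dots> = G2 (s div 2^(Suc n)) (c div 2^(Suc n)) *
      (G2 (s mod 2) (c mod 2) * kron_pow n (s div 2 mod 2^n) (c div 2 mod 2^n))"
    by (subst Suc.IH) (simp_all add: a b)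
  also have "\<dots> = G2 (s mod 2) (c mod 2) * kron_pow (Suc n) (s div 2) (c div 2)"
    by (simp add: c)
  finally show ?case .
qed

lemma GN_kron: "GN n r c = kron_pow n (bitrev n r) c"
proof -
  have "GN n r c = (\<Sum>s<2^n. (if s = bitrev n r then kron_pow n s c else 0))"
    unfolding GN_def BN_def by (intro sum.cong) auto
  also have "\<dots> = kron_pow n (bitrev n r) c" using bitrev_lt[of n r] by simp
  finally show ?thesis .
qed

lemma GN_Suc:
  assumes r: "r < 2^(Suc n)" and c: "c < 2^n" and e: "e < 2"
  shows "GN (Suc n) r (2*c+e) = G2 (r div 2^n) e * GN n (r mod 2^n) c"
proof -
  have h: "r div 2^n < 2" using r by (simp add: less_mult_imp_div_less)
  have bl: "bitrev n (r mod 2^n) < 2^n" by (rule bitrev_lt)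
  have "GN (Suc n) r (2*c+e) = kron_pow (Suc n) (2 * bitrev n (r mod 2^n) + r div 2^n) (2*c+e)"
    unfolding GN_kron bitrev_Suc2 using h by simp
  also have "\<dots> = G2 (r div 2^n) e * kron_pow n (bitrev n (r mod 2^n)) c"
    using h e bl c by (subst kron_lsb) auto
  finally show ?thesis by (simp add: GN_kron)
qed

definition comb :: "nat \<Rightarrow> (nat \<Rightarrow> nat) \<Rightarrow> (nat \<Rightarrow> nat) \<Rightarrow> nat \<Rightarrow> nat" where
  "comb n a b = (\<lambda>r\<in>{0..<2^Suc n}. if r < 2^n then a r else b (r - 2^n))"

lemma sum_comb:
  assumes c: "c < 2^n" and e: "e < 2"
  shows "(\<Sum>r<2^Suc n. comb n a b r * GN (Suc n) r (2*c+e)) =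
     G2 0 e * (\<Sum>r<2^n. a r * GN n r c) + G2 1 e * (\<Sum>r<2^n. b r * GN n r c)"
proof -
  have "(\<Sum>r<2^Suc n. comb n a b r * GN (Suc n) r (2*c+e)) =
     (\<Sum>r<2^n. comb n a b r * GN (Suc n) r (2*c+e)) + (\<Sum>r<2^n. comb n a b (2^n+r) * GN (Suc n) (2^n+r) (2*c+e))"
    using sum_split_add[where m="2^n" and k="2^n" and F="\<lambda>r. comb n a b r * GN (Suc n) r (2*c+e)"] by (simp add: mult_2)
  also have "(\<Sum>r<2^n. comb n a b r * GN (Suc n) r (2*c+e)) = G2 0 e * (\<Sum>r<2^n. a r * GN n r c)"
    unfolding sum_distrib_left
  proof (rule sum.cong[OF refl])
    fix r assume r: "r \<in> {..<(2::nat)^n}"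
    then have "r < 2^Suc n" by simp
    then show "comb n a b r * GN (Suc n) r (2*c+e) = G2 0 e * (a r * GN n r c)"
      using r c e by (simp add: GN_Suc comb_def)
  qed
  also have "(\<Sum>r<2^n. comb n a b (2^n+r) * GN (Suc n) (2^n+r) (2*c+e)) = G2 1 e * (\<Sum>r<2^n. b r * GN n r c)"
    unfolding sum_distrib_left
  proof (rule sum.cong[OF refl])
    fix r assume r: "r \<in> {..<(2::nat)^n}"
    then have r2: "2^n + r < 2^Suc n" by simp
    have "(2^n + r) div 2^n = 1" using r by simp
    moreover have "(2^n + r) mod 2^n = r" using r by simp
    ultimately show "comb n a b (2^n+r) * GN (Suc n) (2^n+r) (2*c+e) = G2 1 e * (b r * GN n r c)"
      using r r2 c e by (simp add: GN_Suc comb_def)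
  qed
  finally show ?thesis .
qed

lemma polar_comb_even:
  assumes c: "c < 2^n"
  shows "polar_transform L (Suc n) (comb n a b) (2*c) = (polar_transform L n a c + polar_transform L n b c) mod L"
  using sum_comb[OF c, of 0 a b] unfolding polar_transform_def by (simp add: G2_def mod_add_eq)

lemma polar_comb_odd:
  assumes c: "c < 2^n"
  shows "polar_transform L (Suc n) (comb n a b) (2*c+1) = polar_transform L n b c"
  using sum_comb[OF c, of 1 a b] unfolding polar_transform_def by (simp add: G2_def)

lemma polar_comb_odd':
  "c < 2^n \<Longrightarrow> polar_transform L (Suc n) (comb n a b) (Suc (2*c)) = polar_transform L n b c"
  using polar_comb_odd by simp

definition lo :: "nat \<Rightarrow> (nat \<Rightarrow> 'a) \<Rightarrow> nat \<Rightarrow> 'a" where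
  "lo n x = restrict x {0..<2^n}"
definition hi :: "nat \<Rightarrow> (nat \<Rightarrow> 'a) \<Rightarrow> nat \<Rightarrow> 'a" where
  "hi n x = (\<lambda>r\<in>{0..<2^n}. x (2^n + r))"

lemma sum_XS_split:
  "(\<Sum>x\<in>{0..<2^Suc n} \<rightarrow>\<^sub>E {0..<L}. F x) =
   (\<Sum>a\<in>{0..<2^n} \<rightarrow>\<^sub>E {0..<L}. \<Sum>b\<in>{0..<2^n} \<rightarrow>\<^sub>E {0..<L}. F (comb n a b))"
proof -
  have "(\<Sum>x\<in>{0..<2^Suc n} \<rightarrow>\<^sub>E {0..<L}. F x) =
     (\<Sum>ab\<in>({0..<2^n} \<rightarrow>\<^sub>E {0..<L}) \<times> ({0..<2^n} \<rightarrow>\<^sub>E {0..<L}). F (comb n (fst ab) (snd ab)))"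
  proof (rule sum.reindex_bij_witness[where i="\<lambda>ab. comb n (fst ab) (snd ab)" and j="\<lambda>x. (lo n x, hi n x)"])
    fix x :: "nat \<Rightarrow> nat" assume x: "x \<in> {0..<2^Suc n} \<rightarrow>\<^sub>E {0..<L}"
    show "comb n (fst (lo n x, hi n x)) (snd (lo n x, hi n x)) = x"
    proof
      fix r show "comb n (fst (lo n x, hi n x)) (snd (lo n x, hi n x)) r = x r"
        using x by (cases "r < 2^Suc n") (auto simp: comb_def lo_def hi_def PiE_def extensional_def)
    qed
    show "(lo n x, hi n x) \<in> ({0..<2^n} \<rightarrow>\<^sub>E {0..<L}) \<times> ({0..<2^n} \<rightarrow>\<^sub>E {0..<L})"
      using x by (auto simp: lo_def hi_def PiE_def Pi_def)
    show "F (comb n (fst (lo n x, hi n x)) (snd (lo n x, hi n x))) = F x"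
      using \<open>comb n (fst (lo n x, hi n x)) (snd (lo n x, hi n x)) = x\<close> by simp
  next
    fix ab :: "(nat \<Rightarrow> nat) \<times> (nat \<Rightarrow> nat)" assume ab: "ab \<in> ({0..<2^n} \<rightarrow>\<^sub>E {0..<L}) \<times> ({0..<(2::nat)^n} \<rightarrow>\<^sub>E {0..<L})"
    obtain a b :: "nat \<Rightarrow> nat" where ab': "ab = (a, b)" by (cases ab)
    have "lo n (comb n a b) = a"
    proof
      fix r show "lo n (comb n a b) r = a r"
        using ab ab' by (auto simp: comb_def lo_def PiE_def extensional_def)
    qed
    moreover have "hi n (comb n a b) = b"
    proof
      fix r show "hi n (comb n a b) r = b r"
        using ab ab' by (auto simp: comb_def hi_def PiE_def extensional_def)
    qed
    ultimately show "(lo n (comb n (fst ab) (snd ab)), hi n (comb n (fst ab) (snd ab))) = ab"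
      using ab' by simp
    show "comb n (fst ab) (snd ab) \<in> {0..<2^Suc n} \<rightarrow>\<^sub>E {0..<L}"
      using ab ab' by (auto simp: comb_def PiE_def Pi_def)
  qed
  then show ?thesis by (simp add: sum.cartesian_product split_def)
qed

lemma prod_comb:
  "(\<Prod>j<2^Suc n. P (comb n a b j) (y j) :: real) =
   (\<Prod>j<2^n. P (a j) (y j)) * (\<Prod>j<2^n. P (b j) (y (2^n + j)))"
proof -
  have "(\<Prod>j<2^Suc n. P (comb n a b j) (y j)) =
     (\<Prod>j<2^n. P (comb n a b j) (y j)) * (\<Prod>j<2^n. P (comb n a b (2^n+j)) (y (2^n+j)))"
    using prod_split_add[where m="2^n" and k="2^n" and F="\<lambda>j. P (comb n a b j) (y j)"] by (simp add: mult_2)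
  also have "(\<Prod>j<2^n. P (comb n a b j) (y j)) = (\<Prod>j<2^n. P (a j) (y j))"
    by (rule prod.cong) (auto simp: comb_def)
  also have "(\<Prod>j<2^n. P (comb n a b (2^n+j)) (y (2^n+j))) = (\<Prod>j<2^n. P (b j) (y (2^n + j)))"
    by (rule prod.cong) (auto simp: comb_def)
  finally show ?thesis .
qed

lemma mod_pair:
  assumes "A < L" "B < L" "W1 < L" "W2 < (L::nat)"
  shows "((A + B) mod L = W1 \<and> B = W2) \<longleftrightarrow> (A = (W1 + L - W2) mod L \<and> B = W2)"
  using assms by (auto simp: mod_lt2)

lemma mod_single:
  assumes "A < L" "B < L" "W1 < (L::nat)"
  shows "((A + B) mod L = W1) \<longleftrightarrow> (B = (W1 + L - A) mod L)"
  using assms by (auto simp: mod_lt2)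

definition vA :: "nat \<Rightarrow> nat \<Rightarrow> (nat \<Rightarrow> nat) \<Rightarrow> nat \<Rightarrow> nat" where
  "vA L p w = (\<lambda>j\<in>{0..<p}. (w (2*j) + L - w (2*j+1)) mod L)"
definition vB :: "nat \<Rightarrow> (nat \<Rightarrow> nat) \<Rightarrow> nat \<Rightarrow> nat" where
  "vB p w = (\<lambda>j\<in>{0..<p}. w (2*j+1))"

lemma polar_lt: "L > 0 \<Longrightarrow> polar_transform L n x j < L"
  by (simp add: polar_transform_def)

lemma all_pairs: "(\<forall>j<2*(p::nat). Q j) \<longleftrightarrow> (\<forall>j<p. Q (2*j) \<and> Q (2*j+1))"
proof
  assume "\<forall>j<p. Q (2*j) \<and> Q (2*j+1)"
  then show "\<forall>j<2*p. Q j"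
  proof (intro allI impI)
    fix j assume h: "\<forall>j<p. Q (2*j) \<and> Q (2*j+1)" and j: "j < 2*p"
    have "j div 2 < p" using j by simp
    then have "Q (2*(j div 2)) \<and> Q (2*(j div 2)+1)" using h by blast
    moreover have "j = 2*(j div 2) \<or> j = 2*(j div 2)+1" by presburger
    ultimately show "Q j" by metis
  qed
qed auto

lemma cond_pairs:
  assumes L: "L > 0" and p: "p \<le> 2^n" and w: "\<And>j. j < 2*p \<Longrightarrow> w j < L"
  shows "(\<forall>j<2*p. polar_transform L (Suc n) (comb n a b) j = w j) \<longleftrightarrow>
    ((\<forall>j<p. polar_transform L n a j = vA L p w j) \<and> (\<forall>j<p. polar_transform L n b j = vB p w j))"
proof -
  have "(\<forall>j<2*p. polar_transform L (Suc n) (comb n a b) j = w j) \<longleftrightarrow>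
    (\<forall>j<p. (polar_transform L n a j + polar_transform L n b j) mod L = w (2*j) \<and> polar_transform L n b j = w (2*j+1))"
    unfolding all_pairs using p by (auto simp: polar_comb_even polar_comb_odd')
  also have "\<dots> \<longleftrightarrow> (\<forall>j<p. polar_transform L n a j = vA L p w j \<and> polar_transform L n b j = vB p w j)"
  proof (intro all_cong1 imp_cong refl)
    fix j assume j: "j < p"
    show "((polar_transform L n a j + polar_transform L n b j) mod L = w (2*j) \<and> polar_transform L n b j = w (2*j+1))
      \<longleftrightarrow> (polar_transform L n a j = vA L p w j \<and> polar_transform L n b j = vB p w j)"
      unfolding vA_def vB_def using j by (simp add: mod_pair polar_lt L w)
  qed
  finally show ?thesis by blast
qed

lemma delta_sum:
  assumes "k0 < (L::nat)"
  shows "(\<Sum>c<L. (if c = k0 then X c else (0::real))) = X k0"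
  using assms by (subst sum.delta[OF finite_lessThan]) simp

lemma joint_minus:
  assumes L: "L > 0" and p: "p < 2^n" and w: "\<And>j. j < 2*p \<Longrightarrow> w j < L" and a': "a' < L"
  shows "joint_UQ L P (Suc n) (2*p) a' (w, y) =
    conv L (\<lambda>c. joint_UQ L P n p c (vA L p w, lo n y)) (\<lambda>c. joint_UQ L P n p c (vB p w, hi n y)) a'"
proof -
  define XS where "XS = {0..<(2::nat)^n} \<rightarrow>\<^sub>E {0..<L}"
  define U where "U = polar_transform L n"
  define CA where "CA a = (\<forall>j<p. U a j = vA L p w j)" for a
  define CB where "CB b = (\<forall>j<p. U b j = vB p w j)" for b
  define PA where "PA a = (\<Prod>j<2^n. P (a j) (y j))" for a
  define PB where "PB b = (\<Prod>j<2^n. P (b j) (y (2^n + j)))" for b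
  have PAe: "(\<Prod>j<2^n. P (a j) (lo n y j)) = PA a" for a
    unfolding PA_def by (rule prod.cong) (auto simp: lo_def)
  have PBe: "(\<Prod>j<2^n. P (b j) (hi n y j)) = PB b" for b
    unfolding PB_def by (rule prod.cong) (auto simp: hi_def)
  have jA: "joint_UQ L P n p c (vA L p w, lo n y) = (\<Sum>a\<in>XS. if CA a \<and> U a p = c then PA a else 0)" for c
    unfolding joint_UQ_def XS_def CA_def U_def fst_conv snd_conv by (intro sum.cong refl) (auto simp: PAe)
  have jB: "joint_UQ L P n p c (vB p w, hi n y) = (\<Sum>b\<in>XS. if CB b \<and> U b p = c then PB b else 0)" for c
    unfolding joint_UQ_def XS_def CB_def U_def fst_conv snd_conv by (intro sum.cong refl) (auto simp: PBe)
  have lhs: "joint_UQ L P (Suc n) (2*p) a' (w, y) =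
     (\<Sum>a\<in>XS. \<Sum>b\<in>XS. if CA a \<and> CB b \<and> U b p = (a' + L - U a p) mod L then PA a * PB b else 0)"
    unfolding joint_UQ_def XS_def sum_XS_split fst_conv snd_conv
  proof (intro sum.cong refl)
    fix a b
    have "((\<forall>j<2*p. polar_transform L (Suc n) (comb n a b) j = w j) \<and> polar_transform L (Suc n) (comb n a b) (2*p) = a')
      \<longleftrightarrow> (CA a \<and> CB b \<and> U b p = (a' + L - U a p) mod L)"
    proof -
      have c1: "(\<forall>j<2*p. polar_transform L (Suc n) (comb n a b) j = w j) \<longleftrightarrow> CA a \<and> CB b"
        using cond_pairs[where w=w and a=a and b=b, OF L less_imp_le[OF p] w] unfolding CA_def CB_def U_def .
      have c2: "polar_transform L (Suc n) (comb n a b) (2*p) = a' \<longleftrightarrow> U b p = (a' + L - U a p) mod L"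
        using polar_comb_even[OF p, of L a b] mod_single[OF polar_lt[OF L] polar_lt[OF L] a', of n a p n b p]
        by (simp add: U_def)
      show ?thesis using c1 c2 by blast
    qed
    then show "(if (\<forall>j<2*p. polar_transform L (Suc n) (comb n a b) j = w j) \<and> polar_transform L (Suc n) (comb n a b) (2*p) = a'
          then \<Prod>j<2 ^ Suc n. P (comb n a b j) (y j) else 0) =
         (if CA a \<and> CB b \<and> U b p = (a' + L - U a p) mod L then PA a * PB b else 0)"
      using prod_comb[of P n a b y] by (simp add: PA_def PB_def)
  qed
  have "conv L (\<lambda>c. joint_UQ L P n p c (vA L p w, lo n y)) (\<lambda>c. joint_UQ L P n p c (vB p w, hi n y)) a'
     = (\<Sum>c<L. \<Sum>a\<in>XS. \<Sum>b\<in>XS. (if CA a \<and> U a p = c then PA a else 0) *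
          (if CB b \<and> U b p = (a' + L - c) mod L then PB b else 0))"
    unfolding conv_def jA jB sum_product ..
  also have "\<dots> = (\<Sum>a\<in>XS. \<Sum>b\<in>XS. \<Sum>c<L. (if CA a \<and> U a p = c then PA a else 0) *
          (if CB b \<and> U b p = (a' + L - c) mod L then PB b else 0))"
    by (rule swap3)
  also have "\<dots> = (\<Sum>a\<in>XS. \<Sum>b\<in>XS. if CA a \<and> CB b \<and> U b p = (a' + L - U a p) mod L then PA a * PB b else 0)"
  proof (intro sum.cong refl)
    fix a b
    have "(\<Sum>c<L. (if CA a \<and> U a p = c then PA a else 0) * (if CB b \<and> U b p = (a' + L - c) mod L then PB b else 0))
       = (\<Sum>c<L. if c = U a p then (if CA a \<and> CB b \<and> U b p = (a' + L - U a p) mod L then PA a * PB b else 0) else 0)"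
      by (intro sum.cong refl) auto
    also have "\<dots> = (if CA a \<and> CB b \<and> U b p = (a' + L - U a p) mod L then PA a * PB b else 0)"
      by (rule delta_sum[where X="\<lambda>_. _"]) (simp add: U_def polar_lt L)
    finally show "(\<Sum>c<L. (if CA a \<and> U a p = c then PA a else 0) * (if CB b \<and> U b p = (a' + L - c) mod L then PB b else 0))
       = (if CA a \<and> CB b \<and> U b p = (a' + L - U a p) mod L then PA a * PB b else 0)" .
  qed
  finally show ?thesis using lhs by simp
qed

lemma joint_plus:
  assumes L: "L > 0" and p: "p < 2^n" and w: "\<And>j. j < 2*p+1 \<Longrightarrow> w j < L" and a': "a' < L"
  shows "joint_UQ L P (Suc n) (2*p+1) a' (w, y) =
    joint_UQ L P n p ((w (2*p) + L - a') mod L) (vA L p w, lo n y) * joint_UQ L P n p a' (vB p w, hi n y)"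
proof -
  define XS where "XS = {0..<(2::nat)^n} \<rightarrow>\<^sub>E {0..<L}"
  define U where "U = polar_transform L n"
  define s' where "s' = (w (2*p) + L - a') mod L"
  define CA where "CA a = ((\<forall>j<p. U a j = vA L p w j) \<and> U a p = s')" for a
  define CB where "CB b = ((\<forall>j<p. U b j = vB p w j) \<and> U b p = a')" for b
  define PA where "PA a = (\<Prod>j<2^n. P (a j) (y j))" for a
  define PB where "PB b = (\<Prod>j<2^n. P (b j) (y (2^n + j)))" for b
  have PAe: "(\<Prod>j<2^n. P (a j) (lo n y j)) = PA a" for a
    unfolding PA_def by (rule prod.cong) (auto simp: lo_def)
  have PBe: "(\<Prod>j<2^n. P (b j) (hi n y j)) = PB b" for b
    unfolding PB_def by (rule prod.cong) (auto simp: hi_def)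
  have jA: "joint_UQ L P n p s' (vA L p w, lo n y) = (\<Sum>a\<in>XS. if CA a then PA a else 0)"
    unfolding joint_UQ_def XS_def CA_def U_def fst_conv snd_conv by (intro sum.cong refl) (auto simp: PAe)
  have jB: "joint_UQ L P n p a' (vB p w, hi n y) = (\<Sum>b\<in>XS. if CB b then PB b else 0)"
    unfolding joint_UQ_def XS_def CB_def U_def fst_conv snd_conv by (intro sum.cong refl) (auto simp: PBe)
  have w': "\<And>j. j < 2*p \<Longrightarrow> w j < L" using w by simp
  have lhs: "joint_UQ L P (Suc n) (2*p+1) a' (w, y) =
     (\<Sum>a\<in>XS. \<Sum>b\<in>XS. if CA a \<and> CB b then PA a * PB b else 0)"
    unfolding joint_UQ_def XS_def sum_XS_split fst_conv snd_conv
  proof (intro sum.cong refl)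
    fix a b
    have "((\<forall>j<2*p+1. polar_transform L (Suc n) (comb n a b) j = w j) \<and> polar_transform L (Suc n) (comb n a b) (2*p+1) = a')
      \<longleftrightarrow> (CA a \<and> CB b)"
    proof -
      have c0: "(\<forall>j<2*p+1. polar_transform L (Suc n) (comb n a b) j = w j) \<longleftrightarrow>
         (\<forall>j<2*p. polar_transform L (Suc n) (comb n a b) j = w j) \<and> polar_transform L (Suc n) (comb n a b) (2*p) = w (2*p)"
        by (auto simp: less_Suc_eq)
      have c1: "(\<forall>j<2*p. polar_transform L (Suc n) (comb n a b) j = w j) \<longleftrightarrow>
          (\<forall>j<p. U a j = vA L p w j) \<and> (\<forall>j<p. U b j = vB p w j)"
        using cond_pairs[where w=w and a=a and b=b, OF L less_imp_le[OF p] w'] unfolding U_def .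
      have c2: "(polar_transform L (Suc n) (comb n a b) (2*p) = w (2*p) \<and> polar_transform L (Suc n) (comb n a b) (2*p+1) = a')
         \<longleftrightarrow> (U a p = s' \<and> U b p = a')"
        using polar_comb_even[OF p, of L a b] polar_comb_odd[OF p, of L a b]
          mod_pair[OF polar_lt[OF L] polar_lt[OF L] w[of "2*p"] a', of n a p n b p]
        by (simp add: U_def s'_def)
      show ?thesis using c0 c1 c2 unfolding CA_def CB_def by blast
    qed
    then show "(if (\<forall>j<2*p+1. polar_transform L (Suc n) (comb n a b) j = w j) \<and> polar_transform L (Suc n) (comb n a b) (2*p+1) = a'
          then \<Prod>j<2 ^ Suc n. P (comb n a b j) (y j) else 0) =
         (if CA a \<and> CB b then PA a * PB b else 0)"
      using prod_comb[of P n a b y] by (simp add: PA_def PB_def)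
  qed
  have "joint_UQ L P n p s' (vA L p w, lo n y) * joint_UQ L P n p a' (vB p w, hi n y)
     = (\<Sum>a\<in>XS. \<Sum>b\<in>XS. (if CA a then PA a else 0) * (if CB b then PB b else 0))"
    unfolding jA jB sum_product ..
  also have "\<dots> = (\<Sum>a\<in>XS. \<Sum>b\<in>XS. if CA a \<and> CB b then PA a * PB b else 0)"
    by (intro sum.cong refl) auto
  finally show ?thesis using lhs by (simp add: s'_def)
qed



definition wcomb :: "nat \<Rightarrow> nat \<Rightarrow> (nat \<Rightarrow> nat) \<Rightarrow> (nat \<Rightarrow> nat) \<Rightarrow> nat \<Rightarrow> nat \<Rightarrow> nat \<Rightarrow> nat" where
  "wcomb L p v1 v2 s m = (\<lambda>j\<in>{0..<m}. if j = 2*p then s else if even j then (v1 (j div 2) + v2 (j div 2)) mod L else v2 (j div 2))"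

definition ycomb :: "nat \<Rightarrow> (nat \<Rightarrow> 'y) \<Rightarrow> (nat \<Rightarrow> 'y) \<Rightarrow> nat \<Rightarrow> 'y" where
  "ycomb n y1 y2 = (\<lambda>r\<in>{0..<2^Suc n}. if r < 2^n then y1 r else y2 (r - 2^n))"

definition phiA :: "nat \<Rightarrow> nat \<Rightarrow> nat \<Rightarrow> (nat \<Rightarrow> nat) \<times> (nat \<Rightarrow> 'y) \<Rightarrow> (nat \<Rightarrow> nat) \<times> (nat \<Rightarrow> 'y)" where
  "phiA L n p q = (vA L p (fst q), lo n (snd q))"
definition phiB :: "nat \<Rightarrow> nat \<Rightarrow> (nat \<Rightarrow> nat) \<times> (nat \<Rightarrow> 'y) \<Rightarrow> (nat \<Rightarrow> nat) \<times> (nat \<Rightarrow> 'y)" where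
  "phiB n p q = (vB p (fst q), hi n (snd q))"

lemma modA: "A < L \<Longrightarrow> B < (L::nat) \<Longrightarrow> ((A + L - B) mod L + B) mod L = A"
  by (auto simp: mod_lt2)
lemma modB: "A < L \<Longrightarrow> B < (L::nat) \<Longrightarrow> ((A + B) mod L + L - B) mod L = A"
  by (auto simp: mod_lt2)

lemma y_round1: "y \<in> {0..<2^Suc n} \<rightarrow>\<^sub>E (UNIV::'y set) \<Longrightarrow> ycomb n (lo n y) (hi n y) = y"
proof
  fix r assume y: "y \<in> {0..<2^Suc n} \<rightarrow>\<^sub>E (UNIV::'y set)"
  show "ycomb n (lo n y) (hi n y) r = y r"
    using y by (cases "r < 2^Suc n") (auto simp: ycomb_def lo_def hi_def PiE_def extensional_def)
qed

lemma y_round2: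
  assumes "y1 \<in> {0..<2^n} \<rightarrow>\<^sub>E (UNIV::'y set)" "y2 \<in> {0..<2^n} \<rightarrow>\<^sub>E (UNIV::'y set)"
  shows "lo n (ycomb n y1 y2) = y1" "hi n (ycomb n y1 y2) = y2"
proof -
  show "lo n (ycomb n y1 y2) = y1"
  proof
    fix r show "lo n (ycomb n y1 y2) r = y1 r" using assms by (auto simp: ycomb_def lo_def PiE_def extensional_def)
  qed
  show "hi n (ycomb n y1 y2) = y2"
  proof
    fix r show "hi n (ycomb n y1 y2) r = y2 r" using assms by (auto simp: ycomb_def hi_def PiE_def extensional_def)
  qed
qed

lemma y_mem:
  "lo n y \<in> {0..<2^n} \<rightarrow>\<^sub>E (UNIV::'y set)" "hi n y \<in> {0..<2^n} \<rightarrow>\<^sub>E (UNIV::'y set)"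
  "ycomb n y1 y2 \<in> {0..<2^Suc n} \<rightarrow>\<^sub>E (UNIV::'y set)"
  by (auto simp: lo_def hi_def ycomb_def)

lemma w_round1:
  assumes w: "w \<in> {0..<m} \<rightarrow>\<^sub>E {0..<L}" and m: "m = 2*p \<or> m = 2*p+1"
  shows "wcomb L p (vA L p w) (vB p w) (w (2*p)) m = w"
proof
  fix j
  show "wcomb L p (vA L p w) (vB p w) (w (2*p)) m j = w j"
  proof (cases "j < m")
    case False then show ?thesis using w by (auto simp: wcomb_def PiE_def extensional_def)
  next
    case True
    show ?thesis
    proof (cases "j = 2*p")
      case True then show ?thesis using \<open>j < m\<close> by (simp add: wcomb_def)
    next
      case ne: False
      then have jp: "j div 2 < p" using True m by auto
      have wl: "\<And>i. i < m \<Longrightarrow> w i < L" using w by auto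
      show ?thesis
      proof (cases "even j")
        case True
        then have "2 * (j div 2) = j" by simp
        moreover have "2 * (j div 2) + 1 < m" using jp m by auto
        ultimately show ?thesis using \<open>j < m\<close> ne True jp wl[of j] wl[of "2 * (j div 2) + 1"]
          by (simp add: wcomb_def vA_def vB_def modA)
      next
        case False
        then have "2 * (j div 2) + 1 = j" by presburger
        then show ?thesis using \<open>j < m\<close> ne False jp by (simp add: wcomb_def vA_def vB_def)
      qed
    qed
  qed
qed

lemma w_round2:
  assumes v1: "v1 \<in> {0..<p} \<rightarrow>\<^sub>E {0..<L}" and v2: "v2 \<in> {0..<p} \<rightarrow>\<^sub>E {0..<L}" and m: "2*p \<le> m"
  shows "vA L p (wcomb L p v1 v2 s m) = v1" "vB p (wcomb L p v1 v2 s m) = v2"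
proof -
  show "vA L p (wcomb L p v1 v2 s m) = v1"
  proof
    fix j show "vA L p (wcomb L p v1 v2 s m) j = v1 j"
    proof (cases "j < p")
      case True
      have "(2 * j + 1) div 2 = j" by presburger
      moreover have "v1 j < L" "v2 j < L" using True v1 v2 by auto
      ultimately show ?thesis using True m by (auto simp: vA_def wcomb_def modB)
    next
      case False then show ?thesis using v1 by (auto simp: vA_def PiE_def extensional_def)
    qed
  qed
  show "vB p (wcomb L p v1 v2 s m) = v2"
  proof
    fix j show "vB p (wcomb L p v1 v2 s m) j = v2 j"
    proof (cases "j < p")
      case True
      have "(2 * j + 1) div 2 = j" by presburger
      with True m show ?thesis by (auto simp: vB_def wcomb_def)
    next
      case False then show ?thesis using v2 by (auto simp: vB_def PiE_def extensional_def)
    qed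
  qed
qed

lemma w_mem:
  assumes "L > 0"
  shows "w \<in> {0..<m} \<rightarrow>\<^sub>E {0..<L} \<Longrightarrow> 2*p \<le> m \<Longrightarrow> vA L p w \<in> {0..<p} \<rightarrow>\<^sub>E {0..<L}"
    and "w \<in> {0..<m} \<rightarrow>\<^sub>E {0..<L} \<Longrightarrow> 2*p \<le> m \<Longrightarrow> vB p w \<in> {0..<p} \<rightarrow>\<^sub>E {0..<L}"
    and "v2 \<in> {0..<p} \<rightarrow>\<^sub>E {0..<L} \<Longrightarrow> s < L \<Longrightarrow> m \<le> 2*p+1 \<Longrightarrow> wcomb L p v1 v2 s m \<in> {0..<m} \<rightarrow>\<^sub>E {0..<L}"
proof -
  show "w \<in> {0..<m} \<rightarrow>\<^sub>E {0..<L} \<Longrightarrow> 2*p \<le> m \<Longrightarrow> vA L p w \<in> {0..<p} \<rightarrow>\<^sub>E {0..<L}"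
    using assms by (auto simp: vA_def)
  show "w \<in> {0..<m} \<rightarrow>\<^sub>E {0..<L} \<Longrightarrow> 2*p \<le> m \<Longrightarrow> vB p w \<in> {0..<p} \<rightarrow>\<^sub>E {0..<L}"
    by (auto simp: vB_def PiE_def Pi_def)
  assume v2: "v2 \<in> {0..<p} \<rightarrow>\<^sub>E {0..<L}" and s: "s < L" and m: "m \<le> 2*p+1"
  have "v2 (j div 2) < L" if "j < m" "j \<noteq> 2*p" for j
  proof -
    have "j div 2 < p" using that m by auto
    then show ?thesis using v2 by auto
  qed
  then show "wcomb L p v1 v2 s m \<in> {0..<m} \<rightarrow>\<^sub>E {0..<L}"
    using s assms by (auto simp: wcomb_def)
qed

lemma wcomb_2p: "wcomb L p v1 v2 s (2*p) = wcomb L p v1 v2 s' (2*p)"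
  by (auto simp: wcomb_def)

lemma Qset_minus_sum:
  fixes G :: "(nat \<Rightarrow> nat) \<times> (nat \<Rightarrow> 'y::finite) \<Rightarrow> (nat \<Rightarrow> nat) \<times> (nat \<Rightarrow> 'y) \<Rightarrow> real"
  assumes L: "L > 0"
  shows "(\<Sum>q\<in>Qset L (Suc n) (2*p). G (phiA L n p q) (phiB n p q)) = (\<Sum>qa\<in>Qset L n p. \<Sum>qb\<in>Qset L n p. G qa qb)"
proof -
  have "(\<Sum>q\<in>Qset L (Suc n) (2*p). G (phiA L n p q) (phiB n p q)) = (\<Sum>x\<in>Qset L n p \<times> Qset L n p. G (fst x) (snd x))"
  proof (rule sum.reindex_bij_witness[where j="\<lambda>q. (phiA L n p q, phiB n p q)"
        and i="\<lambda>x. (wcomb L p (fst (fst x)) (fst (snd x)) 0 (2*p), ycomb n (snd (fst x)) (snd (snd x)))"])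
    fix q :: "(nat \<Rightarrow> nat) \<times> (nat \<Rightarrow> 'y)" assume q: "q \<in> Qset L (Suc n) (2*p)"
    obtain w y where qq: "q = (w, y)" by (cases q)
    have w: "w \<in> {0..<2*p} \<rightarrow>\<^sub>E {0..<L}" and y: "y \<in> {0..<2^Suc n} \<rightarrow>\<^sub>E (UNIV::'y set)"
      using q qq by (auto simp: Qset_def)
    show "(wcomb L p (fst (fst (phiA L n p q, phiB n p q))) (fst (snd (phiA L n p q, phiB n p q))) 0 (2*p),
          ycomb n (snd (fst (phiA L n p q, phiB n p q))) (snd (snd (phiA L n p q, phiB n p q)))) = q"
      using w_round1[OF w, of p] y_round1[OF y] wcomb_2p[of L p "vA L p w" "vB p w" 0 "w (2*p)"]
      by (simp add: qq phiA_def phiB_def)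
    show "(phiA L n p q, phiB n p q) \<in> Qset L n p \<times> Qset L n p"
      using w_mem(1,2)[OF L w] y_mem(1,2)[of n y] by (simp add: qq phiA_def phiB_def Qset_def)
  next
    fix x :: "((nat \<Rightarrow> nat) \<times> (nat \<Rightarrow> 'y)) \<times> ((nat \<Rightarrow> nat) \<times> (nat \<Rightarrow> 'y))"
    assume x: "x \<in> Qset L n p \<times> Qset L n p"
    obtain v1 y1 v2 y2 where xx: "x = ((v1, y1), (v2, y2))" by (metis prod.collapse)
    have v1: "v1 \<in> {0..<p} \<rightarrow>\<^sub>E {0..<L}" and v2: "v2 \<in> {0..<p} \<rightarrow>\<^sub>E {0..<L}"
      and y1: "y1 \<in> {0..<2^n} \<rightarrow>\<^sub>E (UNIV::'y set)" and y2: "y2 \<in> {0..<2^n} \<rightarrow>\<^sub>E (UNIV::'y set)"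
      using x xx by (auto simp: Qset_def)
    show "(phiA L n p (wcomb L p (fst (fst x)) (fst (snd x)) 0 (2*p), ycomb n (snd (fst x)) (snd (snd x))),
           phiB n p (wcomb L p (fst (fst x)) (fst (snd x)) 0 (2*p), ycomb n (snd (fst x)) (snd (snd x)))) = x"
      using w_round2[OF v1 v2, of "2*p" 0] y_round2[OF y1 y2] by (simp add: xx phiA_def phiB_def)
    show "(wcomb L p (fst (fst x)) (fst (snd x)) 0 (2*p), ycomb n (snd (fst x)) (snd (snd x))) \<in> Qset L (Suc n) (2*p)"
      using w_mem(3)[OF L v2, of 0 "2*p" v1] L y_mem(3)[of n y1 y2] by (simp add: xx Qset_def)
  qed simp
  then show ?thesis by (simp add: sum.cartesian_product split_def)
qed

lemma Qset_plus_sum: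
  fixes G :: "(nat \<Rightarrow> nat) \<times> (nat \<Rightarrow> 'y::finite) \<Rightarrow> (nat \<Rightarrow> nat) \<times> (nat \<Rightarrow> 'y) \<Rightarrow> nat \<Rightarrow> real"
  assumes L: "L > 0"
  shows "(\<Sum>q\<in>Qset L (Suc n) (2*p+1). G (phiA L n p q) (phiB n p q) (fst q (2*p)))
     = (\<Sum>qa\<in>Qset L n p. \<Sum>qb\<in>Qset L n p. \<Sum>s<L. G qa qb s)"
proof -
  have "(\<Sum>q\<in>Qset L (Suc n) (2*p+1). G (phiA L n p q) (phiB n p q) (fst q (2*p)))
      = (\<Sum>x\<in>(Qset L n p \<times> Qset L n p) \<times> {..<L}. G (fst (fst x)) (snd (fst x)) (snd x))"
  proof (rule sum.reindex_bij_witness[where j="\<lambda>q. ((phiA L n p q, phiB n p q), fst q (2*p))"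
        and i="\<lambda>x. (wcomb L p (fst (fst (fst x))) (fst (snd (fst x))) (snd x) (2*p+1), ycomb n (snd (fst (fst x))) (snd (snd (fst x))))"])
    fix q :: "(nat \<Rightarrow> nat) \<times> (nat \<Rightarrow> 'y)" assume q: "q \<in> Qset L (Suc n) (2*p+1)"
    obtain w y where qq: "q = (w, y)" by (cases q)
    have w: "w \<in> {0..<2*p+1} \<rightarrow>\<^sub>E {0..<L}" and y: "y \<in> {0..<2^Suc n} \<rightarrow>\<^sub>E (UNIV::'y set)"
      using q qq by (auto simp: Qset_def)
    show "(wcomb L p (fst (fst (fst ((phiA L n p q, phiB n p q), fst q (2*p))))) (fst (snd (fst ((phiA L n p q, phiB n p q), fst q (2*p)))))
          (snd ((phiA L n p q, phiB n p q), fst q (2*p))) (2*p+1),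
          ycomb n (snd (fst (fst ((phiA L n p q, phiB n p q), fst q (2*p))))) (snd (snd (fst ((phiA L n p q, phiB n p q), fst q (2*p)))))) = q"
      using w_round1[OF w, of p] y_round1[OF y] by (simp add: qq phiA_def phiB_def)
    show "((phiA L n p q, phiB n p q), fst q (2*p)) \<in> (Qset L n p \<times> Qset L n p) \<times> {..<L}"
      using w_mem(1,2)[OF L w] y_mem(1,2)[of n y] w by (auto simp: qq phiA_def phiB_def Qset_def)
  next
    fix x :: "(((nat \<Rightarrow> nat) \<times> (nat \<Rightarrow> 'y)) \<times> ((nat \<Rightarrow> nat) \<times> (nat \<Rightarrow> 'y))) \<times> nat"
    assume x: "x \<in> (Qset L n p \<times> Qset L n p) \<times> {..<L}"
    obtain v1 y1 v2 y2 s where xx: "x = (((v1, y1), (v2, y2)), s)" by (metis prod.collapse)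
    have v1: "v1 \<in> {0..<p} \<rightarrow>\<^sub>E {0..<L}" and v2: "v2 \<in> {0..<p} \<rightarrow>\<^sub>E {0..<L}"
      and y1: "y1 \<in> {0..<2^n} \<rightarrow>\<^sub>E (UNIV::'y set)" and y2: "y2 \<in> {0..<2^n} \<rightarrow>\<^sub>E (UNIV::'y set)"
      and s: "s < L"
      using x xx by (auto simp: Qset_def)
    show "((phiA L n p (wcomb L p (fst (fst (fst x))) (fst (snd (fst x))) (snd x) (2*p+1), ycomb n (snd (fst (fst x))) (snd (snd (fst x)))),
            phiB n p (wcomb L p (fst (fst (fst x))) (fst (snd (fst x))) (snd x) (2*p+1), ycomb n (snd (fst (fst x))) (snd (snd (fst x))))),
           fst (wcomb L p (fst (fst (fst x))) (fst (snd (fst x))) (snd x) (2*p+1), ycomb n (snd (fst (fst x))) (snd (snd (fst x)))) (2*p)) = x"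
      using w_round2[OF v1 v2, of "2*p+1" s] y_round2[OF y1 y2] by (simp add: xx phiA_def phiB_def wcomb_def)
    show "(wcomb L p (fst (fst (fst x))) (fst (snd (fst x))) (snd x) (2*p+1), ycomb n (snd (fst (fst x))) (snd (snd (fst x)))) \<in> Qset L (Suc n) (2*p+1)"
      using w_mem(3)[OF L v2 s, of "2*p+1" v1] y_mem(3)[of n y1 y2] by (simp add: xx Qset_def)
  qed simp
  also have "\<dots> = (\<Sum>ab\<in>Qset L n p \<times> Qset L n p. \<Sum>s<L. G (fst ab) (snd ab) s)"
  proof -
    have "(\<Sum>ab\<in>Qset L n p \<times> Qset L n p. \<Sum>s<L. G (fst ab) (snd ab) s) = (\<Sum>x\<in>(Qset L n p \<times> Qset L n p) \<times> {..<L}. G (fst (fst x)) (snd (fst x)) (snd x))"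
      unfolding sum.cartesian_product[where A="Qset L n p \<times> Qset L n p" and B="{..<L}"] by (simp add: split_def)
    then show ?thesis by simp
  qed
  also have "\<dots> = (\<Sum>qa\<in>Qset L n p. \<Sum>qb\<in>Qset L n p. \<Sum>s<L. G qa qb s)"
  proof -
    have "(\<Sum>qa\<in>Qset L n p. \<Sum>qb\<in>Qset L n p. H qa qb) = (\<Sum>z\<in>Qset L n p \<times> Qset L n p. case z of (qa, qb) \<Rightarrow> H qa qb)"
      for H :: "_ \<Rightarrow> _ \<Rightarrow> real" by (rule sum.cartesian_product)
    from this[of "\<lambda>qa qb. \<Sum>s<L. G qa qb s"] show ?thesis by (simp add: split_def)
  qed
  finally show ?thesis .
qed



lemma div_aux: "(S::real) \<noteq> 0 \<Longrightarrow> S / c * (X / S) / 2 = X / (2 * c)"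
  by (cases "c = 0") (simp_all add: field_simps)

lemma tvK_term:
  fixes f :: "nat \<Rightarrow> real"
  assumes nn: "\<And>a. a < L \<Longrightarrow> f a \<ge> 0" and u: "u < L" and u': "u' < L"
  shows "(\<Sum>a<L. f a) / (real L - 1) * \<bar>f u / (\<Sum>a<L. f a) - f u' / (\<Sum>a<L. f a)\<bar> / 2
     = \<bar>f u - f u'\<bar> / (2 * (real L - 1))"
proof (cases "(\<Sum>a<L. f a) = 0")
  case True
  then have "\<forall>a\<in>{..<L}. f a = 0" using nn by (subst sum_nonneg_eq_0_iff[symmetric]) auto
  then show ?thesis using True u u' by simp
next
  case False
  have "\<bar>f u / (\<Sum>a<L. f a) - f u' / (\<Sum>a<L. f a)\<bar> = \<bar>f u - f u'\<bar> / \<bar>\<Sum>a<L. f a\<bar>"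
    by (simp add: diff_divide_distrib[symmetric] abs_divide)
  moreover have "\<bar>\<Sum>a<L. f a\<bar> = (\<Sum>a<L. f a)" using nn by (intro abs_of_nonneg sum_nonneg) simp
  ultimately show ?thesis using False div_aux[OF False] by simp
qed

lemma tvK_eq:
  fixes PUQ :: "nat \<Rightarrow> 'q \<Rightarrow> real"
  assumes nn: "\<And>a q. PUQ a q \<ge> 0"
  shows "tvK L PUQ Qs = (\<Sum>q\<in>Qs. Dfull L (\<lambda>a. PUQ a q)) / (2 * (real L - 1))"
proof -
  have "tvK L PUQ Qs = (\<Sum>q\<in>Qs. Dfull L (\<lambda>a. PUQ a q) / (2 * (real L - 1)))"
    unfolding tvK_def Let_def
  proof (rule sum.cong[OF refl])
    fix q
    have "(\<Sum>u<L. \<Sum>u'\<in>{..<L} - {u}. (\<Sum>a<L. PUQ a q) / (real L - 1) *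
             \<bar>PUQ u q / (\<Sum>a<L. PUQ a q) - PUQ u' q / (\<Sum>a<L. PUQ a q)\<bar> / 2)
        = (\<Sum>u<L. \<Sum>u'\<in>{..<L} - {u}. \<bar>PUQ u q - PUQ u' q\<bar> / (2 * (real L - 1)))"
      by (intro sum.cong refl) (rule tvK_term[where f="\<lambda>a. PUQ a q"], auto simp: nn)
    also have "\<dots> = (\<Sum>u<L. \<Sum>u'<L. \<bar>PUQ u q - PUQ u' q\<bar> / (2 * (real L - 1)))"
    proof (rule sum.cong[OF refl])
      fix u assume "u \<in> {..<L}"
      then show "(\<Sum>u'\<in>{..<L} - {u}. \<bar>PUQ u q - PUQ u' q\<bar> / (2 * (real L - 1))) = (\<Sum>u'<L. \<bar>PUQ u q - PUQ u' q\<bar> / (2 * (real L - 1)))"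
        by (simp add: sum_diff1)
    qed
    also have "\<dots> = Dfull L (\<lambda>a. PUQ a q) / (2 * (real L - 1))"
      unfolding Dfull_def by (simp add: sum_divide_distrib)
    finally show "(\<Sum>u<L. \<Sum>u'\<in>{..<L} - {u}. (\<Sum>a<L. PUQ a q) / (real L - 1) *
             \<bar>PUQ u q / (\<Sum>a<L. PUQ a q) - PUQ u' q / (\<Sum>a<L. PUQ a q)\<bar> / 2)
        = Dfull L (\<lambda>a. PUQ a q) / (2 * (real L - 1))" .
  qed
  then show ?thesis by (simp add: sum_divide_distrib)
qed

lemma joint_nn:
  assumes "\<And>u y. P u y \<ge> 0"
  shows "joint_UQ L P n p a q \<ge> 0"
  unfolding joint_UQ_def using assms by (intro sum_nonneg) (auto intro: prod_nonneg)

lemma Dfull_cong: "(\<And>a. a < L \<Longrightarrow> f a = g a) \<Longrightarrow> Dfull L f = Dfull L g"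
  unfolding Dfull_def by (intro sum.cong refl) auto

lemma Dfull_nn: "Dfull L f \<ge> 0"
  unfolding Dfull_def by (intro sum_nonneg) auto

lemma inner_mass:
  assumes L: "L > 0"
  shows "(\<Sum>v\<in>{0..<p} \<rightarrow>\<^sub>E {0..<L}. \<Sum>a<L. if (\<forall>j<p. polar_transform L n x j = v j) \<and> polar_transform L n x p = a
          then (X::real) else 0) = X"
proof -
  define r where "r = restrict (polar_transform L n x) {0..<p}"
  have rin: "r \<in> {0..<p} \<rightarrow>\<^sub>E {0..<L}" unfolding r_def using polar_lt[OF L] by auto
  have "(\<Sum>v\<in>{0..<p} \<rightarrow>\<^sub>E {0..<L}. \<Sum>a<L. if (\<forall>j<p. polar_transform L n x j = v j) \<and> polar_transform L n x p = a
          then X else 0) = (\<Sum>v\<in>{0..<p} \<rightarrow>\<^sub>E {0..<L}. if v = r then X else 0)"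
  proof (rule sum.cong[OF refl])
    fix v assume v: "v \<in> {0..<p} \<rightarrow>\<^sub>E {0..<L}"
    have e: "(\<forall>j<p. polar_transform L n x j = v j) \<longleftrightarrow> v = r"
    proof
      assume h: "\<forall>j<p. polar_transform L n x j = v j"
      show "v = r"
      proof
        fix j show "v j = r j" using h v by (cases "j < p") (auto simp: r_def PiE_def extensional_def)
      qed
    qed (auto simp: r_def)
    have "(\<Sum>a<L. if (\<forall>j<p. polar_transform L n x j = v j) \<and> polar_transform L n x p = a then X else 0)
       = (\<Sum>a<L. if a = polar_transform L n x p then (if v = r then X else 0) else 0)"
      using e by (intro sum.cong refl) auto
    also have "\<dots> = (if v = r then X else 0)" by (rule delta_sum) (rule polar_lt[OF L])
    finally show "(\<Sum>a<L. if (\<forall>j<p. polar_transform L n x j = v j) \<and> polar_transform L n x p = a then X else 0)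
       = (if v = r then X else 0)" .
  qed
  also have "\<dots> = X" using rin by (subst sum.delta) (auto intro: finite_PiE)
  finally show ?thesis .
qed

lemma total_mass:
  fixes P :: "nat \<Rightarrow> 'y::finite \<Rightarrow> real"
  assumes L: "L > 0" and sum1: "(\<Sum>u<L. \<Sum>y\<in>UNIV. P u y) = 1"
  shows "(\<Sum>q\<in>Qset L n p. \<Sum>a<L. joint_UQ L P n p a q) = 1"
proof -
  define XS where "XS = {0..<(2::nat)^n} \<rightarrow>\<^sub>E {0..<L}"
  define V where "V = {0..<p} \<rightarrow>\<^sub>E {0..<L}"
  define YS where "YS = {0..<(2::nat)^n} \<rightarrow>\<^sub>E (UNIV::'y set)"
  define C where "C x v a = ((\<forall>j<p. polar_transform L n x j = v j) \<and> polar_transform L n x p = a)" for x v a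
  define PP where "PP x y = (\<Prod>j<2^n. P (x j) (y j))" for x :: "nat \<Rightarrow> nat" and y
  have "(\<Sum>q\<in>Qset L n p. \<Sum>a<L. joint_UQ L P n p a q)
      = (\<Sum>v\<in>V. \<Sum>y\<in>YS. \<Sum>a<L. \<Sum>x\<in>XS. if C x v a then PP x y else 0)"
  proof -
    have "(\<Sum>v\<in>V. \<Sum>y\<in>YS. H v y) = (\<Sum>q\<in>V \<times> YS. case q of (v, y) \<Rightarrow> H v y)" for H :: "_ \<Rightarrow> _ \<Rightarrow> real"
      by (rule sum.cartesian_product)
    from this[of "\<lambda>v y. \<Sum>a<L. \<Sum>x\<in>XS. if C x v a then PP x y else 0"]
    show ?thesis unfolding Qset_def joint_UQ_def V_def YS_def XS_def C_def PP_def by (simp add: split_def)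
  qed
  also have "\<dots> = (\<Sum>y\<in>YS. \<Sum>v\<in>V. \<Sum>a<L. \<Sum>x\<in>XS. if C x v a then PP x y else 0)"
    by (rule sum.swap)
  also have "\<dots> = (\<Sum>y\<in>YS. \<Sum>x\<in>XS. \<Sum>v\<in>V. \<Sum>a<L. if C x v a then PP x y else 0)"
    by (rule sum.cong[OF refl], rule swap3[symmetric])
  also have "\<dots> = (\<Sum>y\<in>YS. \<Sum>x\<in>XS. PP x y)"
    unfolding C_def V_def by (intro sum.cong refl inner_mass L)
  also have "\<dots> = (\<Sum>y\<in>YS. \<Prod>j\<in>{0..<2^n}. \<Sum>u\<in>{0..<L}. P u (y j))"
  proof (rule sum.cong[OF refl])
    fix y
    show "(\<Sum>x\<in>XS. PP x y) = (\<Prod>j\<in>{0..<2^n}. \<Sum>u\<in>{0..<L}. P u (y j))"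
      unfolding XS_def PP_def
      by (subst prod_sum_PiE[where f="\<lambda>j u. P u (y j)"]) (simp_all add: atLeast0LessThan)
  qed
  also have "\<dots> = (\<Prod>j\<in>{0..<(2::nat)^n}. \<Sum>y'\<in>UNIV. \<Sum>u\<in>{0..<L}. P u y')"
    unfolding YS_def by (subst prod_sum_PiE[where A="{0..<(2::nat)^n}" and f="\<lambda>j y'. \<Sum>u\<in>{0..<L}. P u y'"]) simp_all
  also have "(\<Sum>y'\<in>UNIV. \<Sum>u\<in>{0..<L}. P u y') = 1"
    using sum1 by (simp add: sum.swap[of _ UNIV] atLeast0LessThan)
  finally show ?thesis by simp
qed



lemma alg_aux: "(c::real) > 0 \<Longrightarrow> l > 0 \<Longrightarrow> S * S / l / (2 * c) = 2 * c / l * (S / (2 * c))^2"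
  by (simp add: power2_eq_square field_simps)

theorem proposition3:
  fixes L :: nat and P :: "nat \<Rightarrow> 'y::finite \<Rightarrow> real" and n p b :: nat
  assumes "L \<ge> 2"
    and "\<And>u y. P u y \<ge> 0"
    and "(\<Sum>u<L. \<Sum>y\<in>UNIV. P u y) = 1"
    and "n \<ge> 1" and "p < 2^n" and "b \<in> {0, 1}"
  shows "(b = 0 \<longrightarrow> Kproc L P (n+1) (2*p + b) \<le> 2 * (real L - 1) / real L * (Kproc L P n p)^2)
       \<and> (b = 1 \<longrightarrow> Kproc L P (n+1) (2*p + b) \<le> (1 + real L / 2) * Kproc L P n p)"
proof -
  have L2: "L \<ge> 2" and nn: "\<And>u y. P u y \<ge> 0" and sum1: "(\<Sum>u<L. \<Sum>y\<in>UNIV. P u y) = 1"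
    and p: "p < 2^n" using assms by auto
  have L: "L > 0" using L2 by simp
  have L1: "real L - 1 > 0" using L2 by simp
  define Qs where "Qs = (Qset L n p :: ((nat \<Rightarrow> nat) \<times> (nat \<Rightarrow> 'y)) set)"
  define f where "f q a = joint_UQ L P n p a q" for q a
  define D where "D q = Dfull L (f q)" for q
  define SD where "SD = (\<Sum>q\<in>Qs. D q)"
  have fe: "f q = (\<lambda>a. joint_UQ L P n p a q)" for q by (simp add: f_def fun_eq_iff)
  have fnn: "f q a \<ge> 0" for q a unfolding f_def by (rule joint_nn[OF nn])
  have Kn: "Kproc L P n p = SD / (2 * (real L - 1))"
    unfolding Kproc_def SD_def D_def Qs_def f_def by (rule tvK_eq[OF joint_nn[OF nn]])
  have SDnn: "SD \<ge> 0" unfolding SD_def D_def by (intro sum_nonneg Dfull_nn)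
  have minus: "Kproc L P (Suc n) (2*p) \<le> 2 * (real L - 1) / real L * (Kproc L P n p)^2"
  proof -
    have "Kproc L P (Suc n) (2*p) = (\<Sum>q\<in>Qset L (Suc n) (2*p). Dfull L (\<lambda>a. joint_UQ L P (Suc n) (2*p) a q)) / (2 * (real L - 1))"
      unfolding Kproc_def by (rule tvK_eq[OF joint_nn[OF nn]])
    also have "(\<Sum>q\<in>Qset L (Suc n) (2*p). Dfull L (\<lambda>a. joint_UQ L P (Suc n) (2*p) a q))
        = (\<Sum>q\<in>Qset L (Suc n) (2*p). Dfull L (conv L (f (phiA L n p q)) (f (phiB n p q))))"
    proof (rule sum.cong[OF refl])
      fix q :: "(nat \<Rightarrow> nat) \<times> (nat \<Rightarrow> 'y)" assume q: "q \<in> Qset L (Suc n) (2*p)"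
      obtain w y where qq: "q = (w, y)" by (cases q)
      have w: "\<And>j. j < 2*p \<Longrightarrow> w j < L" using q qq by (auto simp: Qset_def)
      show "Dfull L (\<lambda>a. joint_UQ L P (Suc n) (2*p) a q) = Dfull L (conv L (f (phiA L n p q)) (f (phiB n p q)))"
        by (rule Dfull_cong) (simp add: qq joint_minus[OF L p w] phiA_def phiB_def fe)
    qed
    also have "\<dots> \<le> (\<Sum>q\<in>Qset L (Suc n) (2*p). D (phiA L n p q) * D (phiB n p q) / real L)"
      unfolding D_def by (intro sum_mono conv_bound L)
    also have "\<dots> = (\<Sum>qa\<in>Qs. \<Sum>qb\<in>Qs. D qa * D qb / real L)"
      unfolding Qs_def by (rule Qset_minus_sum[OF L])
    also have "\<dots> = SD * SD / real L"
      unfolding SD_def by (simp add: sum_divide_distrib[symmetric] sum_product)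
    finally have "Kproc L P (Suc n) (2*p) \<le> SD * SD / real L / (2 * (real L - 1))"
      using L1 by (simp add: divide_right_mono)
    also have "\<dots> = 2 * (real L - 1) / real L * (Kproc L P n p)^2"
      unfolding Kn using alg_aux[OF L1, of "real L" SD] L by simp
    finally show ?thesis .
  qed
  have plus: "Kproc L P (Suc n) (2*p+1) \<le> (1 + real L / 2) * Kproc L P n p"
  proof -
    define F where "F q = (\<Sum>u<L. f q u)" for q
    have Ftot: "(\<Sum>q\<in>Qs. F q) = 1" unfolding F_def f_def Qs_def by (rule total_mass[OF L sum1])
    have "Kproc L P (Suc n) (2*p+1) = (\<Sum>q\<in>Qset L (Suc n) (2*p+1). Dfull L (\<lambda>a. joint_UQ L P (Suc n) (2*p+1) a q)) / (2 * (real L - 1))"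
      unfolding Kproc_def by (rule tvK_eq[OF joint_nn[OF nn]])
    also have "(\<Sum>q\<in>Qset L (Suc n) (2*p+1). Dfull L (\<lambda>a. joint_UQ L P (Suc n) (2*p+1) a q))
        = (\<Sum>q\<in>Qset L (Suc n) (2*p+1). (\<lambda>qa qb s. Dfull L (\<lambda>a. f qa ((s + L - a) mod L) * f qb a)) (phiA L n p q) (phiB n p q) (fst q (2*p)))"
    proof (rule sum.cong[OF refl])
      fix q :: "(nat \<Rightarrow> nat) \<times> (nat \<Rightarrow> 'y)" assume q: "q \<in> Qset L (Suc n) (2*p+1)"
      obtain w y where qq: "q = (w, y)" by (cases q)
      have w: "\<And>j. j < 2*p+1 \<Longrightarrow> w j < L" using q qq by (auto simp: Qset_def)
      show "Dfull L (\<lambda>a. joint_UQ L P (Suc n) (2*p+1) a q) =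
          (\<lambda>qa qb s. Dfull L (\<lambda>a. f qa ((s + L - a) mod L) * f qb a)) (phiA L n p q) (phiB n p q) (fst q (2*p))"
        using joint_plus[OF L p w, where P=P and y=y] by (intro Dfull_cong) (simp add: qq phiA_def phiB_def fe)
    qed
    also have "\<dots> = (\<Sum>qa\<in>Qs. \<Sum>qb\<in>Qs. \<Sum>s<L. Dfull L (\<lambda>a. f qa ((s + L - a) mod L) * f qb a))"
      unfolding Qs_def by (rule Qset_plus_sum[OF L])
    also have "\<dots> \<le> (\<Sum>qa\<in>Qs. \<Sum>qb\<in>Qs. F qa * D qb + F qb * D qa)"
      unfolding F_def D_def by (intro sum_mono plus_bound fnn)
    also have "\<dots> = 2 * SD"
      unfolding sum.distrib SD_def by (simp add: sum_product[symmetric] Ftot sum.swap[of _ Qs Qs] mult.commute)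
    finally have "Kproc L P (Suc n) (2*p+1) \<le> 2 * SD / (2 * (real L - 1))"
      using L1 by (simp add: divide_right_mono)
    also have "\<dots> = 2 * Kproc L P n p" unfolding Kn by simp
    also have "\<dots> \<le> (1 + real L / 2) * Kproc L P n p"
      using L2 Kn SDnn L1 by (intro mult_right_mono) auto
    finally show ?thesis .
  qed
  show ?thesis using minus plus by auto
qed

end
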